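(* Let $n\ge 1$ and let $U,V$ be $2^n\times 2^n$ unitary matrices that are functionally distinct, i.e. there is no $\theta\in\mathbb{R}$ with $V=e^{i\theta}U$. Then there exists at least one local quantum stimulus $\ket{l}=\ket{l_{n-1}}\otimes\cdots\otimes\ket{l_0}$, with each $\ket{l_j}\in\{\ket{0},\ket{1},\ket{+},\ket{-},\ket{\uparrow},\ket{\downarrow}\}$, such that $\mathcal{F}(U\ket{l},V\ket{l})\neq 1$.
   Context: Single-qubit states: $\ket{0},\ket{1}$ are the computational basis vectors of $\mathbb{C}^2$, $\ket{\pm}=\tfrac{1}{\sqrt2}(\ket{0}\pm\ket{1})$, $\ket{\uparrow}=\tfrac{1}{\sqrt2}(\ket{0}+i\ket{1})$, $\ket{\downarrow}=\tfrac{1}{\sqrt2}(\ket{0}-i\ket{1})$. The $6^n$ tensor products $\ket{l_{n-1}}\otimes\cdots\otimes\ket{l_0}$ of such states are the local quantum stimuli in $(\mathbb{C}^2)^{\otimes n}\cong\mathbb{C}^{2^n}$. For unit vectors $\ket{\psi},\ket{\phi}$, the fidelity is $\mathcal{F}(\ket{\psi},\ket{\phi})=|\langle\psi|\phi\rangle|^2\in[0,1]$. *)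

theory Defs
  imports "Jordan_Normal_Form.Matrix" "Jordan_Normal_Form.Conjugate"
begin

(* Unitary n x n complex matrix: U^dagger U = I  (square, so also U U^dagger = I) *)
definition adjoint_mat :: "complex mat \<Rightarrow> complex mat" where
  "adjoint_mat A = mat (dim_col A) (dim_row A) (\<lambda>(i,j). cnj (A $$ (j,i)))"

definition unitary_mat :: "nat \<Rightarrow> complex mat \<Rightarrow> bool" where
  "unitary_mat N U \<longleftrightarrow> U \<in> carrier_mat N N \<and> adjoint_mat U * U = 1\<^sub>m N"

definition single_qubit_stimuli :: "complex vec set" where
  "single_qubit_stimuli =
     { vec_of_list [1, 0], vec_of_list [0, 1],
       vec_of_list [1 / complex_of_real (sqrt 2), 1 / complex_of_real (sqrt 2)],
       vec_of_list [1 / complex_of_real (sqrt 2), - 1 / complex_of_real (sqrt 2)],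
       vec_of_list [1 / complex_of_real (sqrt 2), \<i> / complex_of_real (sqrt 2)],
       vec_of_list [1 / complex_of_real (sqrt 2), - \<i> / complex_of_real (sqrt 2)] }"

(* |l_{n-1}> \<otimes> ... \<otimes> |l_0> in C^(2^n): the computational basis index k has
   binary digits b_{n-1} ... b_0 (b_j = bit j of k), and the amplitude is
   prod_j <b_j | l_j>. *)
definition tensor_state :: "nat \<Rightarrow> (nat \<Rightarrow> complex vec) \<Rightarrow> complex vec" where
  "tensor_state n l = vec (2 ^ n) (\<lambda>k. \<Prod>j<n. l j $ ((k div 2 ^ j) mod 2))"

definition local_stimulus :: "nat \<Rightarrow> complex vec \<Rightarrow> bool" where
  "local_stimulus n v \<longleftrightarrow>
     (\<exists>l. (\<forall>j<n. l j \<in> single_qubit_stimuli) \<and> v = tensor_state n l)"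

definition braket :: "complex vec \<Rightarrow> complex vec \<Rightarrow> complex" where
  "braket psi phi = (\<Sum>i<dim_vec psi. cnj (psi $ i) * phi $ i)"

definition fidelity :: "complex vec \<Rightarrow> complex vec \<Rightarrow> real" where
  "fidelity psi phi = (cmod (braket psi phi))\<^sup>2"

end

theory Submission
  imports Defs "Jordan_Normal_Form.Determinant"
begin

lemma adjoint_carrier: "A \<in> carrier_mat N N \<Longrightarrow> adjoint_mat A \<in> carrier_mat N N"
  by (simp add: adjoint_mat_def)

lemma braket_adj:
  assumes A: "A \<in> carrier_mat N N" and x: "x \<in> carrier_vec N" and w: "w \<in> carrier_vec N"
  shows "braket (A *\<^sub>v x) w = braket x (adjoint_mat A *\<^sub>v w)"
proof -
  have "braket (A *\<^sub>v x) w = (\<Sum>i<N. \<Sum>j<N. cnj (A $$ (i,j)) * cnj (x $ j) * w $ i)"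
    using A x w
    by (auto simp: braket_def scalar_prod_def lessThan_atLeast0 sum_distrib_right sum_distrib_left
         intro!: sum.cong)
  also have "\<dots> = (\<Sum>j<N. \<Sum>i<N. cnj (A $$ (i,j)) * cnj (x $ j) * w $ i)"
    by (rule sum.swap)
  also have "\<dots> = braket x (adjoint_mat A *\<^sub>v w)"
    using A x w
    by (auto simp: braket_def scalar_prod_def adjoint_mat_def lessThan_atLeast0 sum_distrib_left
         intro!: sum.cong)
  finally show ?thesis .
qed

lemma cs_eq:
  assumes x: "x \<in> carrier_vec N" and y: "y \<in> carrier_vec N"
    and xx: "braket x x = 1" and yy: "braket y y = 1" and c: "cmod (braket x y) = 1"
  shows "y = braket x y \<cdot>\<^sub>v x"
proof -
  define c where "c = braket x y"
  have yx: "braket y x = cnj c"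
    using x y by (simp add: c_def braket_def mult.commute)
  define d where "d i = y $ i - c * x $ i" for i
  have "(\<Sum>i<N. cnj (d i) * d i) = braket y y - c * braket y x - cnj c * braket x y + c * cnj c * braket x x"
    using x y by (simp add: d_def braket_def algebra_simps sum.distrib sum_subtractf sum_distrib_left)
  also have "\<dots> = 1 - c * cnj c" using xx yy yx by (simp add: c_def)
  also have "c * cnj c = 1" using c by (simp add: c_def complex_mult_cnj cmod_def) 
  finally have s0: "(\<Sum>i<N. cnj (d i) * d i) = 0" by simp
  have "(\<Sum>i<N. (cmod (d i))\<^sup>2) = 0"
  proof -
    have "complex_of_real (\<Sum>i<N. (cmod (d i))\<^sup>2) = (\<Sum>i<N. cnj (d i) * d i)"
      unfolding of_real_sum
      by (rule sum.cong; simp only: complex_norm_square mult.commute)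
    with s0 have "complex_of_real (\<Sum>i<N. (cmod (d i))\<^sup>2) = 0" by simp
    then show ?thesis by (simp only: of_real_eq_0_iff)
  qed
  then have "\<forall>i\<in>{..<N}. (cmod (d i))\<^sup>2 = 0"
    by (subst sum_nonneg_eq_0_iff[symmetric]) auto
  then have "\<And>i. i < N \<Longrightarrow> d i = 0" by auto
  then show ?thesis using x y by (intro eq_vecI) (auto simp: d_def c_def)
qed

lemma unit_exp:
  fixes d :: complex assumes "cmod d = 1"
  shows "\<exists>\<theta>::real. d = exp (\<i> * complex_of_real \<theta>)"
proof -
  have "(Re d)\<^sup>2 + (Im d)\<^sup>2 = 1" using assms by (simp add: cmod_def)
  then obtain t where t: "Re d = cos t" "Im d = sin t" by (rule sincos_total_2pi)
  have "d = cis t" using t by (simp add: complex_eq_iff)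
  then show ?thesis by (auto simp: cis_conv_exp)
qed

lemma bits_eq:
  fixes m k :: nat
  shows "m < 2 ^ n \<Longrightarrow> k < 2 ^ n \<Longrightarrow> (\<forall>j<n. m div 2 ^ j mod 2 = k div 2 ^ j mod 2) \<Longrightarrow> m = k"
proof (induction n arbitrary: m k)
  case 0 then show ?case by simp
next
  case (Suc n)
  have "m div 2 = k div 2"
  proof (rule Suc.IH)
    show "m div 2 < 2 ^ n" "k div 2 < 2 ^ n" using Suc.prems by auto
    show "\<forall>j<n. m div 2 div 2 ^ j mod 2 = k div 2 div 2 ^ j mod 2"
    proof (intro allI impI)
      fix j assume "j < n"
      then have "m div 2 ^ Suc j mod 2 = k div 2 ^ Suc j mod 2" using Suc.prems(3) by auto
      then show "m div 2 div 2 ^ j mod 2 = k div 2 div 2 ^ j mod 2"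
        by (simp add: div_mult2_eq)
    qed
  qed
  moreover have "m mod 2 = k mod 2" using Suc.prems(3)[rule_format, of 0] by simp
  ultimately show ?case by (metis div_mult_mod_eq)
qed

definition "e0 = (vec_of_list [1, 0] :: complex vec)"
definition "e1 = (vec_of_list [0, 1] :: complex vec)"
definition "pl = (vec_of_list [1 / complex_of_real (sqrt 2), 1 / complex_of_real (sqrt 2)] :: complex vec)"

definition lb :: "nat \<Rightarrow> nat \<Rightarrow> complex vec" where
  "lb k j = (if k div 2 ^ j mod 2 = 0 then e0 else e1)"

lemma lb_stim: "local_stimulus n (tensor_state n (lb k))"
proof -
  have "\<And>j. lb k j \<in> single_qubit_stimuli"
    by (simp add: lb_def e0_def e1_def single_qubit_stimuli_def)
  then show ?thesis unfolding local_stimulus_def by (intro exI[of _ "lb k"]) simp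
qed

lemma pl_stim: "local_stimulus n (tensor_state n (\<lambda>_. pl))"
proof -
  have "pl \<in> single_qubit_stimuli"
    by (simp add: pl_def single_qubit_stimuli_def)
  then show ?thesis unfolding local_stimulus_def by (intro exI[of _ "\<lambda>_. pl"]) simp
qed

lemma lb_index: "b < 2 \<Longrightarrow> lb k j $ b = (if b = k div 2 ^ j mod 2 then 1 else 0)"
  by (auto simp: lb_def e0_def e1_def less_2_cases_iff)

lemma lb_tensor:
  assumes k: "k < 2 ^ n"
  shows "tensor_state n (lb k) = unit_vec (2 ^ n) k"
proof (rule eq_vecI)
  show "dim_vec (tensor_state n (lb k)) = dim_vec (unit_vec (2 ^ n) k)"
    by (simp add: tensor_state_def)
  fix m assume m: "m < dim_vec (unit_vec (2 ^ n) k)"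
  then have m': "m < 2 ^ n" by simp
  have tm: "tensor_state n (lb k) $ m = (\<Prod>j<n. (if m div 2 ^ j mod 2 = k div 2 ^ j mod 2 then 1 else 0))"
    using m' by (simp add: tensor_state_def lb_index)
  show "tensor_state n (lb k) $ m = unit_vec (2 ^ n) k $ m"
  proof (cases "m = k")
    case True then show ?thesis using tm m' k by simp
  next
    case False
    then obtain j where "j < n" "m div 2 ^ j mod 2 \<noteq> k div 2 ^ j mod 2"
      using bits_eq[OF m' k] by blast
    then have "(\<Prod>j<n. (if m div 2 ^ j mod 2 = k div 2 ^ j mod 2 then 1 else 0::complex)) = 0"
      by (intro prod_zero) auto
    then have "tensor_state n (lb k) $ m = 0" by (simp only: tm)
    then show ?thesis using m' k False by simp
  qed
qed

lemma pl_tensor: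
  "tensor_state n (\<lambda>_. pl) = vec (2 ^ n) (\<lambda>_. (1 / complex_of_real (sqrt 2)) ^ n)"
proof -
  have "\<And>k. (\<Prod>j<n. pl $ (k div 2 ^ j mod 2)) = (1 / complex_of_real (sqrt 2)) ^ n"
  proof -
    fix k :: nat
    have "\<And>j. pl $ (k div 2 ^ j mod 2) = 1 / complex_of_real (sqrt 2)"
    proof -
      fix j
      have "k div 2 ^ j mod 2 < 2" by simp
      then show "pl $ (k div 2 ^ j mod 2) = 1 / complex_of_real (sqrt 2)"
        by (auto simp: pl_def less_2_cases_iff)
    qed
    then show "(\<Prod>j<n. pl $ (k div 2 ^ j mod 2)) = (1 / complex_of_real (sqrt 2)) ^ n" by simp
  qed
  then show ?thesis by (simp add: tensor_state_def)
qed

lemma braket_unit: "k < N \<Longrightarrow> braket (unit_vec N k) (unit_vec N k) = 1"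
  unfolding braket_def by (simp add: sum.delta if_distrib cong: if_cong)

lemma braket_pl: "braket (vec (2 ^ n) (\<lambda>_. (1 / complex_of_real (sqrt 2)) ^ n)) (vec (2 ^ n) (\<lambda>_. (1 / complex_of_real (sqrt 2)) ^ n)) = 1"
proof -
  have c: "cnj (1 / complex_of_real (sqrt 2)) = 1 / complex_of_real (sqrt 2)" by simp
  have "(1 / complex_of_real (sqrt 2)) ^ n * (1 / complex_of_real (sqrt 2)) ^ n = (1/2) ^ n"
    by (simp add: power_mult_distrib[symmetric] power_divide flip: of_real_mult)
  then have "braket (vec (2 ^ n) (\<lambda>_. (1 / complex_of_real (sqrt 2)) ^ n)) (vec (2 ^ n) (\<lambda>_. (1 / complex_of_real (sqrt 2)) ^ n))
     = of_nat (2 ^ n) * (1/2) ^ n"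
    unfolding braket_def by (simp only: dim_vec) (simp add: c)
  also have "\<dots> = 1" by (simp add: power_divide)
  finally show ?thesis .
qed

lemma eig:
  assumes U: "unitary_mat N U" and V: "unitary_mat N V" and l: "l \<in> carrier_vec N"
    and ll: "braket l l = 1" and f: "fidelity (U *\<^sub>v l) (V *\<^sub>v l) = 1"
  shows "(adjoint_mat U * V) *\<^sub>v l = braket l ((adjoint_mat U * V) *\<^sub>v l) \<cdot>\<^sub>v l
     \<and> cmod (braket l ((adjoint_mat U * V) *\<^sub>v l)) = 1"
proof -
  have Uc: "U \<in> carrier_mat N N" and aU: "adjoint_mat U * U = 1\<^sub>m N" using U by (auto simp: unitary_mat_def)
  have Vc: "V \<in> carrier_mat N N" and aV: "adjoint_mat V * V = 1\<^sub>m N" using V by (auto simp: unitary_mat_def)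
  have aUc: "adjoint_mat U \<in> carrier_mat N N" using Uc by (rule adjoint_carrier)
  have aVc: "adjoint_mat V \<in> carrier_mat N N" using Vc by (rule adjoint_carrier)
  define x where "x = U *\<^sub>v l"
  define y where "y = V *\<^sub>v l"
  have xc: "x \<in> carrier_vec N" and yc: "y \<in> carrier_vec N" using Uc Vc l by (auto simp: x_def y_def)
  have "braket x x = braket l ((adjoint_mat U * U) *\<^sub>v l)"
    unfolding x_def using braket_adj[OF Uc l] Uc aUc l by simp
  then have xx: "braket x x = 1" using aU l ll by simp
  have "braket y y = braket l ((adjoint_mat V * V) *\<^sub>v l)"
    unfolding y_def using braket_adj[OF Vc l] Vc aVc l by simp
  then have yy: "braket y y = 1" using aV l ll by simp
  define c where "c = braket l ((adjoint_mat U * V) *\<^sub>v l)"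
  have xy: "braket x y = c"
    unfolding x_def y_def c_def using braket_adj[OF Uc l, of "V *\<^sub>v l"] Vc aUc l by simp
  have "(cmod c)\<^sup>2 = 1" using f xy by (simp add: fidelity_def x_def y_def)
  then have "cmod c = 1 \<or> cmod c = -1" by (simp add: power2_eq_1_iff)
  then have cc: "cmod c = 1" using norm_ge_zero[of c] by linarith
  have ycx: "y = c \<cdot>\<^sub>v x" using cs_eq[OF xc yc xx yy] cc xy by simp
  have "(adjoint_mat U * V) *\<^sub>v l = adjoint_mat U *\<^sub>v y" using aUc Vc l by (simp add: y_def)
  also have "\<dots> = c \<cdot>\<^sub>v (adjoint_mat U *\<^sub>v x)" using ycx mult_mat_vec[OF aUc xc] by simp
  also have "\<dots> = c \<cdot>\<^sub>v l" using aUc Uc l aU by (simp add: x_def flip: assoc_mult_mat_vec)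
  finally show ?thesis using cc by (simp add: c_def)
qed

theorem theorem1:
  fixes n :: nat and U V :: "complex mat"
  assumes "n \<ge> 1"
    and "unitary_mat (2 ^ n) U"
    and "unitary_mat (2 ^ n) V"
    and "\<not> (\<exists>\<theta>::real. V = exp (\<i> * complex_of_real \<theta>) \<cdot>\<^sub>m U)"
  shows "\<exists>l. local_stimulus n l \<and> fidelity (U *\<^sub>v l) (V *\<^sub>v l) \<noteq> 1"
proof (rule ccontr)
  assume "\<not> ?thesis"
  then have F: "\<And>l. local_stimulus n l \<Longrightarrow> fidelity (U *\<^sub>v l) (V *\<^sub>v l) = 1" by blast
  define N where "N = (2::nat) ^ n"
  have U: "unitary_mat N U" and V: "unitary_mat N V" using assms by (auto simp: N_def)
  have Uc: "U \<in> carrier_mat N N" and aU: "adjoint_mat U * U = 1\<^sub>m N" using U by (auto simp: unitary_mat_def)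
  have Vc: "V \<in> carrier_mat N N" using V by (auto simp: unitary_mat_def)
  have aUc: "adjoint_mat U \<in> carrier_mat N N" using Uc by (rule adjoint_carrier)
  define M where "M = adjoint_mat U * V"
  have Mc: "M \<in> carrier_mat N N" using aUc Vc by (simp add: M_def)
  have diag: "\<And>a k. a < N \<Longrightarrow> k < N \<Longrightarrow> M $$ (a, k) = (if a = k then M $$ (k,k) else 0)"
    and unit: "\<And>k. k < N \<Longrightarrow> cmod (M $$ (k,k)) = 1"
  proof -
    fix k assume k: "k < N"
    define l where "l = (unit_vec N k :: complex vec)"
    have ls: "local_stimulus n l" using lb_stim[of n k] lb_tensor[of k n] k by (simp add: l_def N_def)
    have lc: "l \<in> carrier_vec N" by (simp add: l_def)
    have e: "M *\<^sub>v l = braket l (M *\<^sub>v l) \<cdot>\<^sub>v l \<and> cmod (braket l (M *\<^sub>v l)) = 1"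
      unfolding M_def by (rule eig[OF U V lc braket_unit[OF k, folded l_def] F[OF ls]])
    have Ml: "\<And>a. a < N \<Longrightarrow> (M *\<^sub>v l) $ a = M $$ (a,k)" using Mc k by (simp add: l_def)
    have b: "braket l (M *\<^sub>v l) = M $$ (k,k)"
    proof -
      have "braket l (M *\<^sub>v l) = (\<Sum>i<N. if i = k then M $$ (i,k) else 0)"
        unfolding braket_def using Ml k by (intro sum.cong) (auto simp: l_def)
      then show ?thesis using k by simp
    qed
    show "cmod (M $$ (k,k)) = 1" using e b by simp
    fix a assume a: "a < N"
    have "(M *\<^sub>v l) $ a = (M $$ (k,k) \<cdot>\<^sub>v l) $ a" using e b by simp
    then have "M $$ (a, k) = M $$ (k,k) * (if a = k then 1 else 0)"
      using Ml[OF a] a k by (simp add: l_def)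
    then show "M $$ (a, k) = (if a = k then M $$ (k,k) else 0)"
      by (cases "a = k") simp_all
  qed
  define d where "d = M $$ (0,0)"
  have N0: "0 < N" by (simp add: N_def)
  have same: "\<And>a. a < N \<Longrightarrow> M $$ (a,a) = d"
  proof -
    define s where "s = (1 / complex_of_real (sqrt 2)) ^ n"
    define l where "l = vec N (\<lambda>_. s)"
    have ls: "local_stimulus n l" using pl_stim[of n] pl_tensor[of n] by (simp add: l_def N_def s_def)
    have lc: "l \<in> carrier_vec N" by (simp add: l_def)
    have ll: "braket l l = 1" using braket_pl[of n] by (simp add: l_def N_def s_def)
    define c where "c = braket l (M *\<^sub>v l)"
    have e: "M *\<^sub>v l = c \<cdot>\<^sub>v l"
      unfolding M_def c_def using eig[OF U V lc ll F[OF ls]] by (simp add: M_def)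
    have s0: "s \<noteq> 0" by (simp add: s_def)
    have Ml: "\<And>a. a < N \<Longrightarrow> (M *\<^sub>v l) $ a = M $$ (a,a) * s"
    proof -
      fix a assume a: "a < N"
      have "(M *\<^sub>v l) $ a = (\<Sum>m\<in>{0..<N}. M $$ (a,m) * s)"
        using Mc a by (simp add: l_def scalar_prod_def)
      also have "\<dots> = (\<Sum>m\<in>{0..<N}. if a = m then M $$ (m,m) * s else 0)"
      proof (rule sum.cong)
        fix m assume "m \<in> {0..<N}"
        then have m: "m < N" by simp
        show "M $$ (a,m) * s = (if a = m then M $$ (m,m) * s else 0)"
          using diag[OF a m] by (cases "a = m") simp_all
      qed simp
      finally show "(M *\<^sub>v l) $ a = M $$ (a,a) * s" using a by simp
    qed
    have cM: "\<And>a. a < N \<Longrightarrow> M $$ (a,a) = c"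
    proof -
      fix a assume a: "a < N"
      have "(M *\<^sub>v l) $ a = (c \<cdot>\<^sub>v l) $ a" using e by simp
      then have "M $$ (a,a) * s = c * s" using Ml[OF a] a by (simp add: l_def) blast
      then show "M $$ (a,a) = c" using s0 by simp
    qed
    fix a assume "a < N"
    then show "M $$ (a,a) = d" using cM N0 by (simp add: d_def)
  qed
  have Md: "M = d \<cdot>\<^sub>m 1\<^sub>m N"
  proof (rule eq_matI)
    fix i j assume "i < dim_row (d \<cdot>\<^sub>m 1\<^sub>m N)" "j < dim_col (d \<cdot>\<^sub>m 1\<^sub>m N)"
    then have i: "i < N" and j: "j < N" by auto
    show "M $$ (i,j) = (d \<cdot>\<^sub>m 1\<^sub>m N) $$ (i,j)"
      using diag[OF i j] same[OF j] i j by (cases "i = j") simp_all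
  qed (use Mc in auto)
  have UaU: "U * adjoint_mat U = 1\<^sub>m N" by (rule mat_mult_left_right_inverse[OF aUc Uc aU])
  have "V = (U * adjoint_mat U) * V" using UaU Vc by simp
  also have "\<dots> = U * M" using Uc aUc Vc by (simp add: M_def)
  also have "\<dots> = d \<cdot>\<^sub>m U" using Uc by (simp add: Md mult_smult_distrib[OF Uc one_carrier_mat])
  finally have Vd: "V = d \<cdot>\<^sub>m U" .
  have "cmod d = 1" using unit[OF N0] by (simp add: d_def)
  then obtain \<theta> :: real where "d = exp (\<i> * complex_of_real \<theta>)" using unit_exp by blast
  then show False using Vd assms(4) by blast
qed

end
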